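(* Let $s\ge2$, $1\le t\le k-1$, $N$ a positive multiple of $s^t$, $\lambda=N/s^t$, and let $p_{\max}$ be a positive integer with $\lambda/s^{k-t}\le p_{\max}\le\lambda$ and $p_{\max}\ne\lambda/s^{k-t}$. Then $G(k,s,t)^{\rm LP}=G_{P_{A'(k,s,t)^{\top}}}$.
   Context: Variables $x_{\mathbf{i}}$ are indexed by $\mathbf{i}=(i_1,\dots,i_k)\in\{0,\dots,s-1\}^k$. The LP relaxation of ILP (OA) is: minimize $\sum_{\mathbf i}x_{\mathbf i}$ subject to, for every $t$-subset $J\subseteq\{1,\dots,k\}$ and every $a\in\{0,\dots,s-1\}^J$, $\sum_{\mathbf i:\ i_j=a_j\ \forall j\in J}x_{\mathbf i}=\lambda$, and $0\le x_{\mathbf i}\le p_{\max}$. With feasible set $\mathcal F$, $G(k,s,t)^{\rm LP}$ is the set of permutations $\pi$ of the index set $\{0,\dots,s-1\}^k$ with $\pi(x)\in\mathcal F$ and equal objective value for all $x\in\mathcal F$, where $\pi(x)_{\mathbf i}=x_{\pi^{-1}(\mathbf i)}$. $A'(k,s,t)$ is the matrix whose rows are the coefficient vectors of the equalities $\sum_{\mathbf i:\ i_j=a_j\ \forall j\in J}x_{\mathbf i}=N/s^q$ for all $q\in\{0,\dots,t\}$, all $q$-subsets $J\subseteq\{1,\dots,k\}$ and all $a\in\{0,\dots,s-2\}^J$ (the case $q=0$ being $\sum_{\mathbf i}x_{\mathbf i}=N$). $P_{A'(k,s,t)^{\top}}$ is the $s^k\times s^k$ orthogonal projection matrix onto the row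 space of $A'(k,s,t)$, and for a square matrix $M$ indexed by $\{0,\dots,s-1\}^k$, $G_M=\{\pi:\Pi M\Pi^{\top}=M\}$ where $\Pi$ is the permutation matrix of $\pi$. *)

theory Defs
  imports Complex_Main "HOL-Combinatorics.Permutations" "HOL-Library.FuncSet"
begin

text \<open>Index set \<open>{0,...,s-1}^k\<close>, realised as lists of length k; coordinate j in 1..k
  of the paper is list position j-1 in 0..k-1.\<close>
definition idx :: "nat \<Rightarrow> nat \<Rightarrow> nat list set" where
  "idx k s = {i. length i = k \<and> (\<forall>j<k. i ! j < s)}"

definition cell :: "nat \<Rightarrow> nat \<Rightarrow> nat set \<Rightarrow> (nat \<Rightarrow> nat) \<Rightarrow> nat list set" where
  "cell k s J a = {i \<in> idx k s. \<forall>j\<in>J. i ! j = a j}"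

definition LP_feasible :: "nat \<Rightarrow> nat \<Rightarrow> nat \<Rightarrow> real \<Rightarrow> real \<Rightarrow> (nat list \<Rightarrow> real) set" where
  "LP_feasible k s t lam pmax =
     {x. (\<forall>i. i \<notin> idx k s \<longrightarrow> x i = 0)
       \<and> (\<forall>i\<in>idx k s. 0 \<le> x i \<and> x i \<le> pmax)
       \<and> (\<forall>J a. J \<subseteq> {0..<k} \<and> card J = t \<and> a \<in> PiE J (\<lambda>_. {0..<s})
               \<longrightarrow> (\<Sum>i\<in>cell k s J a. x i) = lam)}"

definition perm_vec :: "(nat list \<Rightarrow> nat list) \<Rightarrow> (nat list \<Rightarrow> real) \<Rightarrow> (nat list \<Rightarrow> real)" where
  "perm_vec \<pi> x = (\<lambda>i. x (inv \<pi> i))"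

definition G_LP :: "nat \<Rightarrow> nat \<Rightarrow> nat \<Rightarrow> real \<Rightarrow> real \<Rightarrow> (nat list \<Rightarrow> nat list) set" where
  "G_LP k s t lam pmax =
     {\<pi>. \<pi> permutes idx k s \<and>
         (\<forall>x\<in>LP_feasible k s t lam pmax.
            perm_vec \<pi> x \<in> LP_feasible k s t lam pmax \<and>
            (\<Sum>i\<in>idx k s. perm_vec \<pi> x i) = (\<Sum>i\<in>idx k s. x i))}"

definition Aprime_rows :: "nat \<Rightarrow> nat \<Rightarrow> nat \<Rightarrow> (nat set \<times> (nat \<Rightarrow> nat)) set" where
  "Aprime_rows k s t = {(J, a). J \<subseteq> {0..<k} \<and> card J \<le> t \<and> a \<in> PiE J (\<lambda>_. {0..s-2})}"

definition Aprime_row :: "nat \<Rightarrow> nat \<Rightarrow> nat set \<times> (nat \<Rightarrow> nat) \<Rightarrow> nat list \<Rightarrow> real" where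
  "Aprime_row k s r = (\<lambda>i. if i \<in> cell k s (fst r) (snd r) then 1 else 0)"

definition row_space :: "nat \<Rightarrow> nat \<Rightarrow> nat \<Rightarrow> (nat list \<Rightarrow> real) set" where
  "row_space k s t = {(\<lambda>i. \<Sum>r\<in>Aprime_rows k s t. c r * Aprime_row k s r i) | c. True}"

definition orth_proj :: "'a set \<Rightarrow> ('a \<Rightarrow> real) set \<Rightarrow> ('a \<Rightarrow> real) \<Rightarrow> ('a \<Rightarrow> real)" where
  "orth_proj I V y = (THE v. v \<in> V \<and> (\<forall>w\<in>V. (\<Sum>i\<in>I. (y i - v i) * w i) = 0))"

definition P_Aprime :: "nat \<Rightarrow> nat \<Rightarrow> nat \<Rightarrow> nat list \<Rightarrow> nat list \<Rightarrow> real" where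
  "P_Aprime k s t = (\<lambda>i j. orth_proj (idx k s) (row_space k s t)
                              (\<lambda>l. if l = j then 1 else 0) i)"

text \<open>\<open>G_M = {\<pi> : \<Pi> M \<Pi>^T = M}\<close>; \<open>(\<Pi> M \<Pi>^T)_{a,b} = M_{\<pi>^{-1}a, \<pi>^{-1}b}\<close>.\<close>
definition G_mat :: "nat \<Rightarrow> nat \<Rightarrow> (nat list \<Rightarrow> nat list \<Rightarrow> real) \<Rightarrow> (nat list \<Rightarrow> nat list) set" where
  "G_mat k s M = {\<pi>. \<pi> permutes idx k s \<and>
      (\<forall>a\<in>idx k s. \<forall>b\<in>idx k s. M (inv \<pi> a) (inv \<pi> b) = M a b)}"

end

theory Submission
  imports Defs
begin

definition ip :: "'a set \<Rightarrow> ('a \<Rightarrow> real) \<Rightarrow> ('a \<Rightarrow> real) \<Rightarrow> real" where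
  "ip I x y = (\<Sum>i\<in>I. x i * y i)"

definition spn :: "'r set \<Rightarrow> ('r \<Rightarrow> 'a \<Rightarrow> real) \<Rightarrow> ('a \<Rightarrow> real) set" where
  "spn R f = {(\<lambda>i. \<Sum>r\<in>R. c r * f r i) | c. True}"

lemma spn_zero: "(\<lambda>i. 0) \<in> spn R f"
  unfolding spn_def by (rule CollectI, rule exI[of _ "\<lambda>_. 0"]) simp

lemma spn_add:
  assumes "v \<in> spn R f" "w \<in> spn R f"
  shows "(\<lambda>i. v i + w i) \<in> spn R f"
proof -
  obtain c where c: "v = (\<lambda>i. \<Sum>r\<in>R. c r * f r i)" using assms(1) unfolding spn_def by blast
  obtain d where d: "w = (\<lambda>i. \<Sum>r\<in>R. d r * f r i)" using assms(2) unfolding spn_def by blast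
  have "(\<lambda>i. v i + w i) = (\<lambda>i. \<Sum>r\<in>R. (c r + d r) * f r i)"
    by (simp add: c d sum.distrib distrib_right)
  then show ?thesis unfolding spn_def by (intro CollectI exI[of _ "\<lambda>r. c r + d r"]) simp
qed

lemma spn_scale:
  assumes "v \<in> spn R f"
  shows "(\<lambda>i. a * v i) \<in> spn R f"
proof -
  obtain c where c: "v = (\<lambda>i. \<Sum>r\<in>R. c r * f r i)" using assms(1) unfolding spn_def by blast
  have "(\<lambda>i. a * v i) = (\<lambda>i. \<Sum>r\<in>R. (a * c r) * f r i)"
    by (simp add: c sum_distrib_left mult.assoc)
  then show ?thesis unfolding spn_def by (intro CollectI exI[of _ "\<lambda>r. a * c r"]) simp
qed

lemma spn_diff:
  assumes "v \<in> spn R f" "w \<in> spn R f"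
  shows "(\<lambda>i. v i - w i) \<in> spn R f"
proof -
  have "(\<lambda>i. v i + (-1) * w i) \<in> spn R f" by (intro spn_add spn_scale assms)
  then show ?thesis by simp
qed

lemma spn_gen:
  assumes "r \<in> R" "finite R"
  shows "f r \<in> spn R f"
proof -
  have "f r = (\<lambda>i. \<Sum>q\<in>R. (if q = r then 1 else 0) * f q i)"
  proof
    fix i
    have "(\<Sum>q\<in>R. (if q = r then 1 else 0) * f q i) = (\<Sum>q\<in>R. if q = r then f q i else 0)"
      by (rule sum.cong) auto
    also have "\<dots> = f r i" using assms by simp
    finally show "f r i = (\<Sum>q\<in>R. (if q = r then 1 else 0) * f q i)" by simp
  qed
  then show ?thesis unfolding spn_def by (intro CollectI exI[of _ "\<lambda>q. if q = r then 1 else 0"]) simp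
qed

lemma spn_sum:
  assumes "finite B" "\<forall>b\<in>B. g b \<in> spn R f"
  shows "(\<lambda>i. \<Sum>b\<in>B. a b * g b i) \<in> spn R f"
  using assms
proof (induction B rule: finite_induct)
  case empty
  then show ?case using spn_zero by simp
next
  case (insert b B)
  have "(\<lambda>i. a b * g b i + (\<Sum>b\<in>B. a b * g b i)) \<in> spn R f"
    using insert by (intro spn_add spn_scale) auto
  then show ?case using insert by simp
qed

lemma spn_insert:
  assumes "v \<in> spn R f" "r \<notin> R" "finite R"
  shows "v \<in> spn (insert r R) f"
proof -
  obtain c where c: "v = (\<lambda>i. \<Sum>r\<in>R. c r * f r i)" using assms(1) unfolding spn_def by blast
  have "v = (\<lambda>i. \<Sum>q\<in>insert r R. (c(r:=0)) q * f q i)"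
    using assms(2,3) by (simp add: c) (intro ext sum.cong, auto)
  then show ?thesis unfolding spn_def by blast
qed

lemma spn_vanish:
  assumes "\<And>r i. i \<notin> I \<Longrightarrow> f r i = 0" "v \<in> spn R f" "i \<notin> I"
  shows "v i = 0"
  using assms unfolding spn_def by auto

lemma ip_diff_left: "ip I (\<lambda>i. a i - b i) w = ip I a w - ip I b w"
  unfolding ip_def by (simp add: left_diff_distrib sum_subtractf)
lemma ip_add_left: "ip I (\<lambda>i. a i + b i) w = ip I a w + ip I b w"
  unfolding ip_def by (simp add: distrib_right sum.distrib)
lemma ip_scale_left: "ip I (\<lambda>i. c * a i) w = c * ip I a w"
  unfolding ip_def by (simp add: sum_distrib_left mult.assoc)
lemma ip_diff_right: "ip I w (\<lambda>i. a i - b i) = ip I w a - ip I w b"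
  unfolding ip_def by (simp add: right_diff_distrib sum_subtractf)
lemma ip_add_right: "ip I w (\<lambda>i. a i + b i) = ip I w a + ip I w b"
  unfolding ip_def by (simp add: distrib_left sum.distrib)
lemma ip_scale_right: "ip I w (\<lambda>i. c * a i) = c * ip I w a"
  unfolding ip_def by (simp add: sum_distrib_left mult.left_commute)

lemma ip_self_zero:
  assumes "finite I" "ip I u u = 0" "i \<in> I"
  shows "u i = 0"
proof -
  have "\<forall>i\<in>I. u i * u i = 0"
    using assms(2) unfolding ip_def by (subst sum_nonneg_eq_0_iff[symmetric]) (auto simp: assms(1))
  then show ?thesis using assms(3) by auto
qed

lemma ip_spn:
  assumes "\<forall>r\<in>R. ip I z (f r) = 0" "w \<in> spn R f"
  shows "ip I z w = 0"
proof -
  obtain c where c: "w = (\<lambda>i. \<Sum>r\<in>R. c r * f r i)" using assms(2) unfolding spn_def by blast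
  have "ip I z w = (\<Sum>i\<in>I. \<Sum>r\<in>R. c r * (z i * f r i))"
    unfolding ip_def c by (simp add: sum_distrib_left mult.left_commute)
  also have "\<dots> = (\<Sum>r\<in>R. c r * ip I z (f r))"
    by (subst sum.swap) (simp add: ip_def sum_distrib_left)
  also have "\<dots> = 0" using assms(1) by simp
  finally show ?thesis .
qed

lemma proj_exists:
  assumes "finite R" "finite I"
  shows "\<exists>v\<in>spn R f. \<forall>r\<in>R. ip I (\<lambda>i. y i - v i) (f r) = 0"
  using assms(1)
proof (induction R arbitrary: y rule: finite_induct)
  case empty
  show ?case using spn_zero by blast
next
  case (insert r R)
  obtain v0 where v0: "v0 \<in> spn R f" "\<forall>q\<in>R. ip I (\<lambda>i. y i - v0 i) (f q) = 0"
    using insert.IH by blast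
  obtain p where p: "p \<in> spn R f" "\<forall>q\<in>R. ip I (\<lambda>i. f r i - p i) (f q) = 0"
    using insert.IH by blast
  define u where "u = (\<lambda>i. f r i - p i)"
  have uR: "\<forall>q\<in>R. ip I u (f q) = 0" using p u_def by simp
  have u_sp: "u \<in> spn (insert r R) f"
    unfolding u_def using insert by (intro spn_diff spn_gen spn_insert p) auto
  have v0_sp: "v0 \<in> spn (insert r R) f" using insert v0 by (intro spn_insert) auto
  have fr: "f r = (\<lambda>i. u i + p i)" unfolding u_def by simp
  show ?case
  proof (cases "ip I u u = 0")
    case True
    have "ip I (\<lambda>i. y i - v0 i) u = 0"
      unfolding ip_def using ip_self_zero[OF assms(2) True] by simp
    moreover have "ip I (\<lambda>i. y i - v0 i) p = 0" using ip_spn[OF v0(2) p(1)] .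
    ultimately have "ip I (\<lambda>i. y i - v0 i) (f r) = 0"
      by (simp add: fr ip_add_right)
    then show ?thesis using v0 v0_sp by auto
  next
    case False
    define \<alpha> where "\<alpha> = ip I (\<lambda>i. y i - v0 i) u / ip I u u"
    define v where "v = (\<lambda>i. v0 i + \<alpha> * u i)"
    have v_sp: "v \<in> spn (insert r R) f" unfolding v_def using v0_sp u_sp by (intro spn_add spn_scale)
    have yv: "(\<lambda>i. y i - v i) = (\<lambda>i. (y i - v0 i) - \<alpha> * u i)" unfolding v_def by (simp add: algebra_simps)
    have oR: "\<forall>q\<in>R. ip I (\<lambda>i. y i - v i) (f q) = 0"
      using v0(2) uR by (simp add: yv ip_diff_left ip_scale_left)
    have e1: "ip I (\<lambda>i. y i - v i) p = 0" using ip_spn[OF oR p(1)] .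
    have e2: "ip I (\<lambda>i. y i - v i) u = ip I (\<lambda>i. y i - v0 i) u - \<alpha> * ip I u u"
      by (simp only: yv ip_diff_left ip_scale_left)
    have e4: "\<alpha> * ip I u u = ip I (\<lambda>i. y i - v0 i) u"
      using nonzero_eq_divide_eq[OF False] \<alpha>_def by blast
    have e3: "ip I (\<lambda>i. y i - v i) u = 0"
      unfolding e2 e4 by simp
    have "ip I (\<lambda>i. y i - v i) (f r) = 0" unfolding fr ip_add_right e1 e3 by simp
    then have "\<forall>q\<in>insert r R. ip I (\<lambda>i. y i - v i) (f q) = 0" using oR by blast
    then show ?thesis using v_sp by blast
  qed
qed

locale PS =
  fixes I :: "nat list set" and R :: "'r set" and f :: "'r \<Rightarrow> nat list \<Rightarrow> real"
  assumes finI: "finite I" and finR: "finite R" and van: "\<And>r i. i \<notin> I \<Longrightarrow> f r i = 0"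
begin

abbreviation "V \<equiv> spn R f"
abbreviation "Q \<equiv> orth_proj I V"

lemma orth_iff: "(\<forall>w\<in>V. (\<Sum>i\<in>I. (y i - v i) * w i) = 0) \<longleftrightarrow> (\<forall>w\<in>V. ip I (\<lambda>i. y i - v i) w = 0)"
  unfolding ip_def by (rule refl)

lemma uniq:
  assumes "v1 \<in> V" "v2 \<in> V" "\<forall>w\<in>V. ip I (\<lambda>i. y i - v1 i) w = 0" "\<forall>w\<in>V. ip I (\<lambda>i. y i - v2 i) w = 0"
  shows "v1 = v2"
proof
  fix i
  define d where "d = (\<lambda>i. v1 i - v2 i)"
  have d: "d \<in> V" unfolding d_def using assms(1,2) by (rule spn_diff)
  have deq: "(\<lambda>i. (y i - v2 i) - (y i - v1 i)) = d" unfolding d_def by (rule ext) simp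
  have "ip I d d = ip I (\<lambda>i. (y i - v2 i) - (y i - v1 i)) d" by (simp only: deq)
  also have "\<dots> = ip I (\<lambda>i. y i - v2 i) d - ip I (\<lambda>i. y i - v1 i) d" by (rule ip_diff_left)
  also have "ip I (\<lambda>i. y i - v2 i) d = 0" using assms(4) d by blast
  also have "ip I (\<lambda>i. y i - v1 i) d = 0" using assms(3) d by blast
  finally have dd: "ip I d d = 0" by simp
  show "v1 i = v2 i"
  proof (cases "i \<in> I")
    case True
    have "d i = 0" using ip_self_zero[OF finI dd True] .
    then show ?thesis unfolding d_def by simp
  next
    case False
    have "v1 i = 0" using spn_vanish[OF van assms(1) False] .
    moreover have "v2 i = 0" using spn_vanish[OF van assms(2) False] .
    ultimately show ?thesis by simp
  qed
qed

lemma ex1: "\<exists>!v. v \<in> V \<and> (\<forall>w\<in>V. (\<Sum>i\<in>I. (y i - v i) * w i) = 0)"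
proof -
  obtain v where v: "v \<in> V" "\<forall>r\<in>R. ip I (\<lambda>i. y i - v i) (f r) = 0"
    using proj_exists[OF finR finI] by blast
  have o: "\<forall>w\<in>V. ip I (\<lambda>i. y i - v i) w = 0"
  proof
    fix w assume "w \<in> V" then show "ip I (\<lambda>i. y i - v i) w = 0" using ip_spn[OF v(2)] by blast
  qed
  show ?thesis
  proof (rule ex1I[of _ v])
    show "v \<in> V \<and> (\<forall>w\<in>V. (\<Sum>i\<in>I. (y i - v i) * w i) = 0)"
      using v(1) o unfolding orth_iff by (rule conjI)
  next
    fix v' assume a: "v' \<in> V \<and> (\<forall>w\<in>V. (\<Sum>i\<in>I. (y i - v' i) * w i) = 0)"
    then have "\<forall>w\<in>V. ip I (\<lambda>i. y i - v' i) w = 0" unfolding orth_iff by (rule conjunct2)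
    then show "v' = v" using uniq[OF conjunct1[OF a] v(1) _ o] by blast
  qed
qed

lemma Q_both: "Q y \<in> V \<and> (\<forall>w\<in>V. ip I (\<lambda>i. y i - Q y i) w = 0)"
proof -
  have "Q y \<in> V \<and> (\<forall>w\<in>V. (\<Sum>i\<in>I. (y i - Q y i) * w i) = 0)"
    unfolding orth_proj_def by (rule theI'[OF ex1])
  then show ?thesis unfolding orth_iff .
qed

lemma Q_in: "Q y \<in> V" using Q_both by (rule conjunct1)
lemma Q_orth: "\<forall>w\<in>V. ip I (\<lambda>i. y i - Q y i) w = 0" using Q_both by (rule conjunct2)

lemma Q_unique:
  assumes "v \<in> V" "\<forall>w\<in>V. ip I (\<lambda>i. y i - v i) w = 0"
  shows "Q y = v"
  using uniq[OF Q_in assms(1) Q_orth assms(2)] .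

lemma Q_id: "v \<in> V \<Longrightarrow> Q v = v"
  by (rule Q_unique) (simp_all add: ip_def)

lemma Q_van: "i \<notin> I \<Longrightarrow> Q y i = 0"
  using spn_vanish[OF van Q_in] .

end

lemma sum_perm_inv:
  assumes "p permutes S"
  shows "(\<Sum>i\<in>S. g (inv p i)) = (\<Sum>i\<in>S. g i)"
  using sum.permute[OF permutes_inv[OF assms], of g] by (simp add: comp_def)

lemma ip_perm:
  assumes "p permutes S"
  shows "ip S (perm_vec p u) w = ip S u (\<lambda>i. w (p i))"
proof -
  have "ip S (perm_vec p u) w = (\<Sum>i\<in>S. ((\<lambda>i. u (inv p i) * w i) \<circ> p) i)"
    unfolding ip_def perm_vec_def by (rule sum.permute[OF assms])
  also have "\<dots> = ip S u (\<lambda>i. w (p i))"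
    unfolding ip_def by (simp add: permutes_inverses[OF assms])
  finally show ?thesis .
qed

lemma perm_vec_inv: "p permutes S \<Longrightarrow> perm_vec (inv p) v = (\<lambda>i. v (p i))"
  unfolding perm_vec_def by (simp add: permutes_inv_inv)

lemma funpow_permutes: "p permutes S \<Longrightarrow> (p ^^ n) permutes S"
  by (induction n) (auto intro: permutes_compose permutes_id)

lemma perm_order:
  assumes "finite S" "p permutes S"
  shows "\<exists>n>0. p ^^ n = id"
proof -
  have "range (\<lambda>n. p ^^ n) \<subseteq> {q. q permutes S}" using funpow_permutes[OF assms(2)] by auto
  then have "finite (range (\<lambda>n::nat. p ^^ n))" using finite_permutations[OF assms(1)] finite_subset by blast
  then have "\<not> inj (\<lambda>n::nat. p ^^ n)" using finite_imageD infinite_UNIV_nat by blast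
  then obtain m n :: nat where mn: "m \<noteq> n" "p ^^ m = p ^^ n" unfolding inj_def by blast
  have "\<exists>a b :: nat. a < b \<and> p ^^ a = p ^^ b"
  proof (cases "m < n")
    case True with mn show ?thesis by blast
  next
    case False with mn have "n < m" "p ^^ n = p ^^ m" by auto
    then show ?thesis by blast
  qed
  then obtain a b :: nat where ab: "a < b" "p ^^ a = p ^^ b" by blast
  have bj: "bij (p ^^ a)" using funpow_permutes[OF assms(2)] permutes_bij by blast
  have "p ^^ (b - a) = id"
  proof
    fix x
    obtain y where y: "x = (p ^^ a) y" using bj by (metis bij_pointE)
    have "(p ^^ (b - a)) x = (p ^^ (b - a + a)) y" unfolding y funpow_add by simp
    also have "\<dots> = (p ^^ a) y" using ab by simp
    finally show "(p ^^ (b - a)) x = id x" using y by simp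
  qed
  then show ?thesis using ab by (intro exI[of _ "b - a"]) auto
qed

lemma pres_inv:
  assumes "finite S" "p permutes S" "\<forall>v\<in>T. perm_vec p v \<in> T"
  shows "\<forall>v\<in>T. perm_vec (inv p) v \<in> T"
proof -
  define q where "q = inv p"
  have q: "q permutes S" unfolding q_def using permutes_inv[OF assms(2)] .
  have step: "\<forall>v\<in>T. (\<lambda>i. v (q i)) \<in> T" using assms(3) unfolding perm_vec_def q_def by blast
  have it: "\<forall>v\<in>T. (\<lambda>i. v ((q ^^ m) i)) \<in> T" for m
  proof (induction m)
    case 0 then show ?case by simp
  next
    case (Suc m)
    show ?case
    proof
      fix v assume "v \<in> T"
      then have vm: "(\<lambda>i. v ((q ^^ m) i)) \<in> T" using Suc by blast
      have "(\<lambda>j. (\<lambda>i. v ((q ^^ m) i)) (q j)) \<in> T" using bspec[OF step vm] by simp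
      then show "(\<lambda>i. v ((q ^^ Suc m) i)) \<in> T" by (simp only: funpow_Suc_right comp_def)
    qed
  qed
  obtain n where n: "n > 0" "q ^^ n = id" using perm_order[OF assms(1) q] by blast
  then obtain n' where n': "n = Suc n'" using gr0_conv_Suc by blast
  have pq: "p = q ^^ n'"
  proof
    fix x
    have "(q ^^ n') x = p (q ((q ^^ n') x))" unfolding q_def
      by (simp add: permutes_inverses[OF assms(2)])
    also have "\<dots> = p ((q ^^ n) x)" unfolding n' by simp
    finally show "p x = (q ^^ n') x" using n by simp
  qed
  show ?thesis
  proof
    fix v assume v: "v \<in> T"
    have "perm_vec (inv p) v = (\<lambda>i. v ((q ^^ n') i))" using perm_vec_inv[OF assms(2)] pq by simp
    then show "perm_vec (inv p) v \<in> T" using it v by simp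
  qed
qed

context PS begin

abbreviation "P \<equiv> (\<lambda>a b. Q (\<lambda>l. if l = b then 1 else 0) a)"

lemma Q_formula: "Q u = (\<lambda>a. \<Sum>b\<in>I. u b * P a b)"
proof (rule Q_unique)
  show "(\<lambda>a. \<Sum>b\<in>I. u b * P a b) \<in> V"
  proof -
    have "\<forall>b\<in>I. Q (\<lambda>l. if l = b then 1 else 0) \<in> V" using Q_in by blast
    from spn_sum[OF finI this, of u] show ?thesis .
  qed
  show "\<forall>w\<in>V. ip I (\<lambda>i. u i - (\<Sum>b\<in>I. u b * P i b)) w = 0"
  proof
    fix w assume w: "w \<in> V"
    have e: "ip I (Q (\<lambda>l. if l = b then 1 else 0)) w = ip I (\<lambda>l. if l = b then 1 else 0) w" for b
    proof -
      have "ip I (\<lambda>i. (\<lambda>l. if l = b then 1 else (0::real)) i - Q (\<lambda>l. if l = b then 1 else 0) i) w = 0"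
        using bspec[OF Q_orth[of "\<lambda>l. if l = b then 1 else (0::real)"] w] by simp
      then show ?thesis unfolding ip_diff_left by simp
    qed
    have eb: "b \<in> I \<Longrightarrow> ip I (\<lambda>l. if l = b then 1 else 0) w = w b" for b
    proof -
      assume b: "b \<in> I"
      have "(\<Sum>l\<in>I. (if l = b then 1 else 0) * w l) = (\<Sum>l\<in>I. if l = b then w l else 0)"
        by (rule sum.cong) auto
      also have "\<dots> = w b" using finI b by simp
      finally show ?thesis unfolding ip_def .
    qed
    have "ip I (\<lambda>i. \<Sum>b\<in>I. u b * P i b) w = (\<Sum>i\<in>I. \<Sum>b\<in>I. u b * (P i b * w i))"
      unfolding ip_def by (simp add: sum_distrib_right mult.assoc)
    also have "\<dots> = (\<Sum>b\<in>I. \<Sum>i\<in>I. u b * (P i b * w i))" by (rule sum.swap)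
    also have "\<dots> = (\<Sum>b\<in>I. u b * ip I (Q (\<lambda>l. if l = b then 1 else 0)) w)"
      unfolding ip_def by (simp add: sum_distrib_left)
    also have "\<dots> = (\<Sum>b\<in>I. u b * w b)"
      using e eb by (intro sum.cong) auto
    also have "\<dots> = ip I u w" unfolding ip_def ..
    finally have fin: "ip I (\<lambda>i. \<Sum>b\<in>I. u b * P i b) w = ip I u w" .
    show "ip I (\<lambda>i. u i - (\<Sum>b\<in>I. u b * P i b)) w = 0" unfolding ip_diff_left fin by simp
  qed
qed

lemma Q_commute:
  assumes "p permutes I" "\<forall>v\<in>V. perm_vec p v \<in> V" "\<forall>v\<in>V. perm_vec (inv p) v \<in> V"
  shows "Q (perm_vec p y) = perm_vec p (Q y)"
proof (rule Q_unique)
  show "perm_vec p (Q y) \<in> V" using assms(2) Q_in by blast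
  show "\<forall>w\<in>V. ip I (\<lambda>i. perm_vec p y i - perm_vec p (Q y) i) w = 0"
  proof
    fix w assume w: "w \<in> V"
    have "(\<lambda>i. perm_vec p y i - perm_vec p (Q y) i) = perm_vec p (\<lambda>i. y i - Q y i)"
      unfolding perm_vec_def by simp
    then have "ip I (\<lambda>i. perm_vec p y i - perm_vec p (Q y) i) w = ip I (\<lambda>i. y i - Q y i) (\<lambda>i. w (p i))"
      using ip_perm[OF assms(1)] by simp
    also have "\<dots> = 0"
    proof -
      have "perm_vec (inv p) w \<in> V" using assms(3) w by blast
      then have "(\<lambda>i. w (p i)) \<in> V" by (simp add: perm_vec_inv[OF assms(1)])
      then show ?thesis using Q_orth by blast
    qed
    finally show "ip I (\<lambda>i. perm_vec p y i - perm_vec p (Q y) i) w = 0" .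
  qed
qed

lemma Gmat_iff:
  assumes p: "p permutes I"
  shows "(\<forall>a\<in>I. \<forall>b\<in>I. P (inv p a) (inv p b) = P a b) \<longleftrightarrow> (\<forall>v\<in>V. perm_vec p v \<in> V)"
proof
  assume H: "\<forall>a\<in>I. \<forall>b\<in>I. P (inv p a) (inv p b) = P a b"
  show "\<forall>v\<in>V. perm_vec p v \<in> V"
  proof
    fix v assume v: "v \<in> V"
    have "Q (perm_vec p v) = perm_vec p v"
    proof
      fix a
      show "Q (perm_vec p v) a = perm_vec p v a"
      proof (cases "a \<in> I")
        case True
        have ia: "inv p a \<in> I" using True permutes_in_image[OF permutes_inv[OF p]] by blast
        have "Q (perm_vec p v) a = (\<Sum>b\<in>I. v (inv p b) * P a b)"
          by (subst Q_formula) (simp add: perm_vec_def)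
        also have "\<dots> = (\<Sum>b\<in>I. v (inv p b) * P (inv p a) (inv p b))"
          using H True by (intro sum.cong) auto
        also have "\<dots> = (\<Sum>b\<in>I. v b * P (inv p a) b)"
          using sum_perm_inv[OF p, of "\<lambda>b. v b * P (inv p a) b"] .
        also have "\<dots> = Q v (inv p a)" by (subst Q_formula) simp
        also have "\<dots> = perm_vec p v a" using Q_id[OF v] by (simp add: perm_vec_def)
        finally show ?thesis .
      next
        case False
        have "inv p a = a" using permutes_not_in[OF permutes_inv[OF p] False] .
        then show ?thesis using Q_van[OF False] spn_vanish[OF van v False]
          by (simp add: perm_vec_def)
      qed
    qed
    then show "perm_vec p v \<in> V" using Q_in by metis
  qed
next
  assume H: "\<forall>v\<in>V. perm_vec p v \<in> V"
  have H': "\<forall>v\<in>V. perm_vec (inv p) v \<in> V" using pres_inv[OF finI p H] .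
  have ip: "inv p permutes I" using permutes_inv[OF p] .
  have H'': "\<forall>v\<in>V. perm_vec (inv (inv p)) v \<in> V" using H permutes_inv_inv[OF p] by simp
  show "\<forall>a\<in>I. \<forall>b\<in>I. P (inv p a) (inv p b) = P a b"
  proof (intro ballI)
    fix a b assume a: "a \<in> I" and b: "b \<in> I"
    have e: "(\<lambda>l. if l = inv p b then 1 else 0) = perm_vec (inv p) (\<lambda>l. if l = b then (1::real) else 0)"
      unfolding perm_vec_inv[OF p]
      by (intro ext) (metis permutes_inverses[OF p])
    have "P (inv p a) (inv p b) = perm_vec (inv p) (Q (\<lambda>l. if l = b then 1 else 0)) (inv p a)"
      unfolding e Q_commute[OF ip H' H''] ..
    also have "\<dots> = P a b" unfolding perm_vec_inv[OF p] by (simp add: permutes_inverses[OF p])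
    finally show "P (inv p a) (inv p b) = P a b" .
  qed
qed

end

lemma finite_idx: "finite (idx k s)"
proof -
  have "idx k s \<subseteq> {xs. set xs \<subseteq> {0..<s} \<and> length xs = k}"
    unfolding idx_def by (auto simp: in_set_conv_nth)
  moreover have "finite {xs. set xs \<subseteq> {0..<s} \<and> length xs = k}"
    by (rule finite_lists_length_eq) simp
  ultimately show ?thesis by (rule finite_subset)
qed

lemma finite_rows: "finite (Aprime_rows k s t)"
proof -
  have "Aprime_rows k s t \<subseteq> Sigma (Pow {0..<k}) (\<lambda>J. PiE J (\<lambda>_. {0..s-2}))"
    unfolding Aprime_rows_def by auto
  moreover have "finite (Sigma (Pow {0..<k}) (\<lambda>J. PiE J (\<lambda>_. {0..s-2})))"
    by (intro finite_SigmaI finite_PiE) (auto intro: finite_subset)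
  ultimately show ?thesis by (rule finite_subset)
qed

lemma cell_sub: "cell k s J a \<subseteq> idx k s"
  unfolding cell_def by auto

lemma finite_cell: "finite (cell k s J a)"
  using finite_subset[OF cell_sub finite_idx] .

lemma row_van: "i \<notin> idx k s \<Longrightarrow> Aprime_row k s r i = 0"
  unfolding Aprime_row_def cell_def by auto

lemma cell_restrict: "cell k s J (restrict a J) = cell k s J a"
  unfolding cell_def by auto

lemma cell_card:
  assumes J: "J \<subseteq> {0..<k}" and a: "\<forall>j\<in>J. a j < s"
  shows "card (cell k s J a) = s ^ (k - card J)"
proof -
  define K where "K = {0..<k} - J"
  have bij: "bij_betw (\<lambda>i. restrict (\<lambda>j. i ! j) K) (cell k s J a) (PiE K (\<lambda>_. {0..<s}))"
  proof (rule bij_betw_byWitness[where f' = "\<lambda>g. map (\<lambda>j. if j \<in> J then a j else g j) [0..<k]"])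
    show "\<forall>i\<in>cell k s J a. map (\<lambda>j. if j \<in> J then a j else restrict (\<lambda>j. i ! j) K j) [0..<k] = i"
    proof
      fix i assume i: "i \<in> cell k s J a"
      then have len: "length i = k" and eq: "\<forall>j\<in>J. i ! j = a j" unfolding cell_def idx_def by auto
      show "map (\<lambda>j. if j \<in> J then a j else restrict (\<lambda>j. i ! j) K j) [0..<k] = i"
        by (rule nth_equalityI) (auto simp: len eq K_def)
    qed
    show "\<forall>g\<in>PiE K (\<lambda>_. {0..<s}). restrict (\<lambda>j. map (\<lambda>j. if j \<in> J then a j else g j) [0..<k] ! j) K = g"
    proof
      fix g assume g: "g \<in> PiE K (\<lambda>_. {0..<s})"
      show "restrict (\<lambda>j. map (\<lambda>j. if j \<in> J then a j else g j) [0..<k] ! j) K = g"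
      proof
        fix j
        show "restrict (\<lambda>j. map (\<lambda>j. if j \<in> J then a j else g j) [0..<k] ! j) K j = g j"
        proof (cases "j \<in> K")
          case True then show ?thesis by (auto simp: K_def)
        next
          case False then show ?thesis using g by (auto simp: PiE_def extensional_def)
        qed
      qed
    qed
    show "(\<lambda>i. restrict (\<lambda>j. i ! j) K) ` cell k s J a \<subseteq> PiE K (\<lambda>_. {0..<s})"
    proof (rule image_subsetI)
      fix i assume "i \<in> cell k s J a"
      then show "restrict (\<lambda>j. i ! j) K \<in> PiE K (\<lambda>_. {0..<s})"
        unfolding restrict_PiE_iff by (auto simp: cell_def idx_def K_def)
    qed
    show "(\<lambda>g. map (\<lambda>j. if j \<in> J then a j else g j) [0..<k]) ` PiE K (\<lambda>_. {0..<s}) \<subseteq> cell k s J a"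
      using J a by (fastforce simp: cell_def idx_def K_def PiE_iff)
  qed
  have fJ: "finite J" using J finite_subset by blast
  have "card (cell k s J a) = card (PiE K (\<lambda>_. {0..<s}))" using bij_betw_same_card[OF bij] .
  also have "\<dots> = s ^ card K" by (simp add: card_PiE K_def)
  also have "card K = k - card J" unfolding K_def using card_Diff_subset[OF fJ J] by simp
  finally show ?thesis .
qed

lemma cell_split:
  assumes "j < k" "j \<notin> J"
  shows "sum u (cell k s J a) = (\<Sum>v\<in>{0..<s}. sum u (cell k s (insert j J) (a(j:=v))))"
proof -
  have "sum u (cell k s J a) = (\<Sum>v\<in>{0..<s}. sum u {i. i \<in> cell k s J a \<and> i ! j = v})"
    by (rule sum.group[symmetric, OF finite_cell]) (use assms(1) in \<open>auto simp: cell_def idx_def\<close>)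
  also have "\<dots> = (\<Sum>v\<in>{0..<s}. sum u (cell k s (insert j J) (a(j:=v))))"
  proof (rule sum.cong)
    fix v
    have "{i. i \<in> cell k s J a \<and> i ! j = v} = cell k s (insert j J) (a(j:=v))"
      unfolding cell_def using assms(2) by auto
    then show "sum u {i. i \<in> cell k s J a \<and> i ! j = v} = sum u (cell k s (insert j J) (a(j:=v)))" by simp
  qed simp
  finally show ?thesis .
qed

lemma low_cells:
  assumes tk: "t \<le> k"
    and H: "\<And>J a. J \<subseteq> {0..<k} \<Longrightarrow> card J = t \<Longrightarrow> a \<in> PiE J (\<lambda>_. {0..<s}) \<Longrightarrow> sum u (cell k s J a) = 0"
  shows "J \<subseteq> {0..<k} \<Longrightarrow> card J \<le> t \<Longrightarrow> \<forall>j\<in>J. a j < s \<Longrightarrow> sum u (cell k s J a) = 0"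
proof (induction "t - card J" arbitrary: J a)
  case 0
  then have ct: "card J = t" by simp
  have "restrict a J \<in> PiE J (\<lambda>_. {0..<s})" using 0 by auto
  then have "sum u (cell k s J (restrict a J)) = 0" using H[OF 0(2) ct] by blast
  then show ?case by (simp add: cell_restrict)
next
  case (Suc d)
  have fJ: "finite J" using Suc.prems(1) finite_subset by blast
  have lt: "card J < k" using Suc.hyps(2) tk by linarith
  have "\<not> {0..<k} \<subseteq> J"
  proof
    assume "{0..<k} \<subseteq> J"
    then have "card {0..<k} \<le> card J" using card_mono[OF fJ] by blast
    then show False using lt by simp
  qed
  then obtain j where j: "j < k" "j \<notin> J" by (auto simp: subset_iff)
  have "sum u (cell k s J a) = (\<Sum>v\<in>{0..<s}. sum u (cell k s (insert j J) (a(j:=v))))"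
    using cell_split[OF j] .
  also have "\<dots> = (\<Sum>v\<in>{0..<s}. 0)"
  proof (rule sum.cong)
    fix v assume v: "v \<in> {0..<s}"
    have ci: "card (insert j J) = Suc (card J)" using fJ j(2) by simp
    show "sum u (cell k s (insert j J) (a(j:=v))) = 0"
    proof (rule Suc.hyps(1))
      show "d = t - card (insert j J)" using Suc.hyps(2) ci by simp
      show "insert j J \<subseteq> {0..<k}" using Suc.prems(1) j by auto
      show "card (insert j J) \<le> t" using Suc.hyps(2) ci by simp
      show "\<forall>i\<in>insert j J. (a(j := v)) i < s" using Suc.prems(3) v by auto
    qed
  qed simp
  finally show ?case by simp
qed

lemma cell_upd_iff:
  assumes "j \<in> J"
  shows "i \<in> cell k s J (a(j:=v)) \<longleftrightarrow> i \<in> cell k s (J - {j}) a \<and> i ! j = v"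
  unfolding cell_def using assms by auto

lemma tcells_in_V:
  assumes s2: "2 \<le> s"
  shows "J \<subseteq> {0..<k} \<Longrightarrow> card J \<le> t \<Longrightarrow> \<forall>j\<in>J. a j < s \<Longrightarrow>
    (\<lambda>i. if i \<in> cell k s J a then 1 else 0) \<in> spn (Aprime_rows k s t) (Aprime_row k s)"
proof (induction "card {j\<in>J. a j = s - 1}" arbitrary: J a rule: less_induct)
  case less
  have fJ: "finite J" using less.prems(1) finite_subset by blast
  show ?case
  proof (cases "\<exists>j\<in>J. a j = s - 1")
    case False
    then have "\<forall>j\<in>J. a j \<le> s - 2" using less.prems(3) by force
    then have r: "(J, restrict a J) \<in> Aprime_rows k s t" unfolding Aprime_rows_def using less.prems by auto
    have "Aprime_row k s (J, restrict a J) = (\<lambda>i. if i \<in> cell k s J a then 1 else 0)"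
      unfolding Aprime_row_def by (simp add: cell_restrict)
    then show ?thesis using spn_gen[OF r finite_rows, of "Aprime_row k s"] by simp
  next
    case True
    then obtain j where j: "j \<in> J" "a j = s - 1" by blast
    define J' where "J' = J - {j}"
    have jk: "j < k" using j less.prems(1) by auto
    have pt: "(if i \<in> cell k s J' a then 1 else 0) = (\<Sum>v\<in>{0..<s}. (if i \<in> cell k s J (a(j:=v)) then 1 else (0::real)))" for i
    proof (cases "i \<in> cell k s J' a")
      case True
      then have "i ! j < s" using jk unfolding cell_def idx_def by auto
      have "(\<Sum>v\<in>{0..<s}. (if i \<in> cell k s J (a(j:=v)) then 1 else (0::real))) = (\<Sum>v\<in>{0..<s}. if i ! j = v then 1 else 0)"
        by (rule sum.cong) (auto simp: cell_upd_iff[OF j(1)] J'_def True[unfolded J'_def])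
      also have "\<dots> = 1" using \<open>i ! j < s\<close> by simp
      finally show ?thesis using True by simp
    next
      case False
      have "(\<Sum>v\<in>{0..<s}. (if i \<in> cell k s J (a(j:=v)) then 1 else (0::real))) = (\<Sum>v\<in>{0..<s}. 0)"
        by (rule sum.cong) (auto simp: cell_upd_iff[OF j(1)] False[unfolded J'_def])
      then show ?thesis using False by simp
    qed
    have s1: "{0..<s} = insert (s - 1) {0..<s - 1}" using s2 by auto
    have aj: "a(j := s - Suc 0) = a" using j(2) by auto
    have dec: "(\<lambda>i. if i \<in> cell k s J a then 1 else 0) =
      (\<lambda>i. (if i \<in> cell k s J' a then 1 else 0) - (\<Sum>v\<in>{0..<s - 1}. 1 * (if i \<in> cell k s J (a(j:=v)) then 1 else (0::real))))"
    proof
      fix i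
      show "(if i \<in> cell k s J a then 1 else 0) =
        (if i \<in> cell k s J' a then 1 else 0) - (\<Sum>v\<in>{0..<s - 1}. 1 * (if i \<in> cell k s J (a(j:=v)) then 1 else (0::real)))"
        unfolding pt s1 using aj by simp
    qed
    have M: "{j'\<in>J. a j' = s - 1} \<subseteq> J" by auto
    have fM: "finite {j'\<in>J. a j' = s - 1}" using fJ by auto
    have in1: "(\<lambda>i. if i \<in> cell k s J' a then 1 else (0::real)) \<in> spn (Aprime_rows k s t) (Aprime_row k s)"
    proof (rule less.hyps)
      have "{j'\<in>J'. a j' = s - 1} \<subset> {j'\<in>J. a j' = s - 1}" unfolding J'_def using j by auto
      then show "card {j'\<in>J'. a j' = s - 1} < card {j'\<in>J. a j' = s - 1}" using psubset_card_mono[OF fM] by blast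
      show "J' \<subseteq> {0..<k}" using less.prems(1) unfolding J'_def by auto
      show "card J' \<le> t" using less.prems(2) card_Diff1_le[of J j] unfolding J'_def by linarith
      show "\<forall>j\<in>J'. a j < s" using less.prems(3) unfolding J'_def by auto
    qed
    have in2: "\<forall>v\<in>{0..<s - 1}. (\<lambda>i. if i \<in> cell k s J (a(j:=v)) then 1 else (0::real)) \<in> spn (Aprime_rows k s t) (Aprime_row k s)"
    proof
      fix v assume v: "v \<in> {0..<s - 1}"
      show "(\<lambda>i. if i \<in> cell k s J (a(j:=v)) then 1 else (0::real)) \<in> spn (Aprime_rows k s t) (Aprime_row k s)"
      proof (rule less.hyps)
        have "{j'\<in>J. (a(j:=v)) j' = s - 1} \<subset> {j'\<in>J. a j' = s - 1}" using j v by auto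
        then show "card {j'\<in>J. (a(j:=v)) j' = s - 1} < card {j'\<in>J. a j' = s - 1}" using psubset_card_mono[OF fM] by blast
        show "J \<subseteq> {0..<k}" using less.prems(1) by auto
        show "card J \<le> t" using less.prems(2) by auto
        show "\<forall>i\<in>J. (a(j:=v)) i < s" using less.prems(3) v by auto
      qed
    qed
    have "(\<lambda>i. \<Sum>v\<in>{0..<s - 1}. 1 * (if i \<in> cell k s J (a(j:=v)) then 1 else (0::real))) \<in> spn (Aprime_rows k s t) (Aprime_row k s)"
      using spn_sum[OF _ in2, of "\<lambda>_. 1"] by simp
    then show ?thesis unfolding dec by (rule spn_diff[OF in1])
  qed
qed

lemma ip_ind:
  assumes "C \<subseteq> I" "finite I"
  shows "ip I u (\<lambda>i. if i \<in> C then 1 else 0) = sum u C"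
proof -
  have "ip I u (\<lambda>i. if i \<in> C then 1 else 0) = (\<Sum>i\<in>I. if i \<in> C then u i else 0)"
    unfolding ip_def by (rule sum.cong) auto
  also have "\<dots> = sum u (I \<inter> C)" by (rule sum.inter_restrict[OF assms(2), symmetric])
  also have "I \<inter> C = C" using assms(1) by auto
  finally show ?thesis .
qed

lemma perp_iff:
  assumes s2: "2 \<le> s" and tk: "t \<le> k"
  shows "(\<forall>r\<in>Aprime_rows k s t. ip (idx k s) u (Aprime_row k s r) = 0) \<longleftrightarrow>
         (\<forall>J a. J \<subseteq> {0..<k} \<and> card J = t \<and> a \<in> PiE J (\<lambda>_. {0..<s}) \<longrightarrow> sum u (cell k s J a) = 0)"
proof
  assume H: "\<forall>r\<in>Aprime_rows k s t. ip (idx k s) u (Aprime_row k s r) = 0"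
  show "\<forall>J a. J \<subseteq> {0..<k} \<and> card J = t \<and> a \<in> PiE J (\<lambda>_. {0..<s}) \<longrightarrow> sum u (cell k s J a) = 0"
  proof (intro allI impI)
    fix J a assume Ja: "J \<subseteq> {0..<k} \<and> card J = t \<and> a \<in> PiE J (\<lambda>_. {0..<s})"
    have "(\<lambda>i. if i \<in> cell k s J a then 1 else 0) \<in> spn (Aprime_rows k s t) (Aprime_row k s)"
      using tcells_in_V[OF s2] Ja by (auto simp: PiE_iff)
    then have "ip (idx k s) u (\<lambda>i. if i \<in> cell k s J a then 1 else 0) = 0"
      using ip_spn[OF H] by blast
    then show "sum u (cell k s J a) = 0" using ip_ind[OF cell_sub finite_idx] by simp
  qed
next
  assume H: "\<forall>J a. J \<subseteq> {0..<k} \<and> card J = t \<and> a \<in> PiE J (\<lambda>_. {0..<s}) \<longrightarrow> sum u (cell k s J a) = 0"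
  show "\<forall>r\<in>Aprime_rows k s t. ip (idx k s) u (Aprime_row k s r) = 0"
  proof
    fix r assume r: "r \<in> Aprime_rows k s t"
    obtain J a where ra: "r = (J, a)" by (cases r)
    have Ja: "J \<subseteq> {0..<k}" "card J \<le> t" "\<forall>j\<in>J. a j < s"
      using r s2 unfolding ra Aprime_rows_def by (auto simp: PiE_iff)
    have "sum u (cell k s J a) = 0"
      using low_cells[OF tk, where u=u and s=s and J=J and a=a] H Ja by blast
    then show "ip (idx k s) u (Aprime_row k s r) = 0"
      unfolding ra Aprime_row_def using ip_ind[OF cell_sub finite_idx] by simp
  qed
qed

lemma PS_inst: "PS (idx k s) (Aprime_rows k s t) (Aprime_row k s)"
  by unfold_locales (auto simp: finite_idx finite_rows row_van)

lemma row_space_spn: "row_space k s t = spn (Aprime_rows k s t) (Aprime_row k s)"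
  unfolding row_space_def spn_def ..



theorem theorem7:
  fixes k s t N pmax :: nat
  assumes "s \<ge> 2" and "1 \<le> t" and "t \<le> k - 1"
    and "N > 0" and "s ^ t dvd N"
    and "pmax > 0"
    and "real N / real s ^ t / real s ^ (k - t) \<le> real pmax"
    and "real pmax \<le> real N / real s ^ t"
    and "real pmax \<noteq> real N / real s ^ t / real s ^ (k - t)"
  shows "G_LP k s t (real N / real s ^ t) (real pmax) = G_mat k s (P_Aprime k s t)"
proof -
  have s2: "2 \<le> s" using assms(1) .
  have tk: "t \<le> k" using assms(2,3) by linarith
  define I where "I = idx k s"
  define R where "R = Aprime_rows k s t"
  define f where "f = Aprime_row k s"
  define lam where "lam = real N / real s ^ t"
  define c where "c = real N / real s ^ t / real s ^ (k - t)"
  define p where "p = real pmax"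
  interpret PS I R f unfolding I_def R_def f_def by (rule PS_inst)
  have spos: "real s > 0" using s2 by simp
  have cpos: "c > 0" unfolding c_def using assms(4) spos by simp
  have cp: "c < p" using assms(7,9) unfolding c_def p_def by simp
  define x0 where "x0 = (\<lambda>i. if i \<in> I then c else 0)"
  have x0_marg: "sum x0 (cell k s J a) = lam" if J: "J \<subseteq> {0..<k}" "card J = t" "a \<in> PiE J (\<lambda>_. {0..<s})" for J a
  proof -
    have "sum x0 (cell k s J a) = (\<Sum>i\<in>cell k s J a. c)"
      unfolding x0_def I_def by (intro sum.cong) (auto dest: subsetD[OF cell_sub])
    also have "\<dots> = real (card (cell k s J a)) * c" by simp
    also have "card (cell k s J a) = s ^ (k - t)" using cell_card[of J k a s] J by (auto simp: PiE_iff)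
    also have "real (s ^ (k - t)) * c = lam" unfolding c_def lam_def using spos by simp
    finally show ?thesis .
  qed
  have Fchar: "x \<in> LP_feasible k s t lam p \<longleftrightarrow>
      (\<forall>i. i \<notin> I \<longrightarrow> x i = 0) \<and> (\<forall>i\<in>I. 0 \<le> x i \<and> x i \<le> p) \<and> (\<forall>r\<in>R. ip I (\<lambda>i. x i - x0 i) (f r) = 0)" for x
  proof -
    have "(\<forall>J a. J \<subseteq> {0..<k} \<and> card J = t \<and> a \<in> PiE J (\<lambda>_. {0..<s}) \<longrightarrow> sum x (cell k s J a) = lam)
      \<longleftrightarrow> (\<forall>J a. J \<subseteq> {0..<k} \<and> card J = t \<and> a \<in> PiE J (\<lambda>_. {0..<s}) \<longrightarrow> sum (\<lambda>i. x i - x0 i) (cell k s J a) = 0)"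
      using x0_marg by (auto simp: sum_subtractf)
    also have "\<dots> \<longleftrightarrow> (\<forall>r\<in>R. ip I (\<lambda>i. x i - x0 i) (f r) = 0)"
      unfolding I_def R_def f_def using perp_iff[OF s2 tk] by blast
    finally show ?thesis unfolding LP_feasible_def I_def by blast
  qed
  have x0_inv: "perm_vec q x0 = x0" if q: "q permutes I" for q
  proof
    fix i
    show "perm_vec q x0 i = x0 i"
    proof (cases "i \<in> I")
      case True
      then have "inv q i \<in> I" using permutes_in_image[OF permutes_inv[OF q]] by blast
      then show ?thesis using True unfolding perm_vec_def x0_def by simp
    next
      case False
      then show ?thesis using permutes_not_in[OF permutes_inv[OF q] False] unfolding perm_vec_def by simp
    qed
  qed
  define Gp where "Gp = {q. q permutes I \<and> (\<forall>v\<in>V. perm_vec q v \<in> V)}"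
  have Gmat: "G_mat k s (P_Aprime k s t) = Gp"
  proof -
    have "G_mat k s (P_Aprime k s t) = {q. q permutes I \<and> (\<forall>a\<in>I. \<forall>b\<in>I. P (inv q a) (inv q b) = P a b)}"
      unfolding G_mat_def P_Aprime_def row_space_spn I_def R_def f_def ..
    also have "\<dots> = Gp" unfolding Gp_def using Gmat_iff by blast
    finally show ?thesis .
  qed
  have GLP: "G_LP k s t lam p = Gp"
  proof
    show "G_LP k s t lam p \<subseteq> Gp"
    proof
      fix q assume qG: "q \<in> G_LP k s t lam p"
      have q: "q permutes I" and qF: "\<forall>x\<in>LP_feasible k s t lam p. perm_vec q x \<in> LP_feasible k s t lam p"
        using qG unfolding G_LP_def I_def by auto
      have A: "\<forall>r\<in>R. ip I (perm_vec q u) (f r) = 0"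
        if u0: "\<forall>i. i \<notin> I \<longrightarrow> u i = 0" and uR: "\<forall>r\<in>R. ip I u (f r) = 0" for u
      proof -
        define m where "m = min c (p - c)"
        have mpos: "m > 0" unfolding m_def using cpos cp by simp
        define M where "M = 1 + (\<Sum>i\<in>I. \<bar>u i\<bar>)"
        have Mpos: "M > 0" unfolding M_def by (simp add: add_pos_nonneg sum_nonneg)
        define \<epsilon> where "\<epsilon> = m / M"
        have epos: "\<epsilon> > 0" unfolding \<epsilon>_def using mpos Mpos by simp
        have small: "\<bar>\<epsilon> * u i\<bar> \<le> m" if i: "i \<in> I" for i
        proof -
          have "\<bar>u i\<bar> \<le> (\<Sum>i\<in>I. \<bar>u i\<bar>)" using member_le_sum[OF i, of "\<lambda>i. \<bar>u i\<bar>"] finI by simp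
          then have ui: "\<bar>u i\<bar> \<le> M" unfolding M_def by simp
          have "\<bar>\<epsilon> * u i\<bar> = m * (\<bar>u i\<bar> / M)" unfolding \<epsilon>_def using mpos Mpos by (simp add: abs_mult)
          also have "\<dots> \<le> m * 1" using ui Mpos mpos by (intro mult_left_mono) auto
          finally show ?thesis by simp
        qed
        define x where "x = (\<lambda>i. x0 i + \<epsilon> * u i)"
        have xd: "(\<lambda>i. x i - x0 i) = (\<lambda>i. \<epsilon> * u i)" unfolding x_def by simp
        have xF: "x \<in> LP_feasible k s t lam p"
          unfolding Fchar
        proof (intro conjI)
          show "\<forall>i. i \<notin> I \<longrightarrow> x i = 0" using u0 unfolding x_def x0_def by simp
          show "\<forall>i\<in>I. 0 \<le> x i \<and> x i \<le> p"
          proof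
            fix i assume i: "i \<in> I"
            have "\<bar>\<epsilon> * u i\<bar> \<le> m" using small[OF i] .
            moreover have "m \<le> c" "m \<le> p - c" unfolding m_def by auto
            ultimately show "0 \<le> x i \<and> x i \<le> p" unfolding x_def x0_def using i by (simp add: abs_le_iff)
          qed
          show "\<forall>r\<in>R. ip I (\<lambda>i. x i - x0 i) (f r) = 0" unfolding xd ip_scale_left using uR by simp
        qed
        then have "perm_vec q x \<in> LP_feasible k s t lam p" using qF by blast
        then have o: "\<forall>r\<in>R. ip I (\<lambda>i. perm_vec q x i - x0 i) (f r) = 0" unfolding Fchar by blast
        have "(\<lambda>i. perm_vec q x i - x0 i) = (\<lambda>i. \<epsilon> * perm_vec q u i)"
        proof
          fix i
          have "perm_vec q x i = perm_vec q x0 i + \<epsilon> * perm_vec q u i" unfolding perm_vec_def x_def by simp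
          then show "perm_vec q x i - x0 i = \<epsilon> * perm_vec q u i" using x0_inv[OF q] by simp
        qed
        then have "\<forall>r\<in>R. \<epsilon> * ip I (perm_vec q u) (f r) = 0" using o ip_scale_left by metis
        then show ?thesis using epos by simp
      qed
      have B: "\<forall>v\<in>V. perm_vec (inv q) v \<in> V"
      proof
        fix v assume v: "v \<in> V"
        define w where "w = perm_vec (inv q) v"
        have w: "w = (\<lambda>i. v (q i))" unfolding w_def using perm_vec_inv[OF q] .
        define u where "u = (\<lambda>i. w i - Q w i)"
        have u0: "\<forall>i. i \<notin> I \<longrightarrow> u i = 0"
        proof (intro allI impI)
          fix i assume i: "i \<notin> I"
          have "w i = 0" unfolding w using permutes_not_in[OF q i] spn_vanish[OF van v i] by simp
          then show "u i = 0" unfolding u_def using Q_van[OF i] by simp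
        qed
        have uV: "\<forall>z\<in>V. ip I u z = 0" unfolding u_def using Q_orth by blast
        have uR: "\<forall>r\<in>R. ip I u (f r) = 0" using uV spn_gen[OF _ finR] by blast
        have "\<forall>r\<in>R. ip I (perm_vec q u) (f r) = 0" using A[OF u0 uR] .
        then have "ip I (perm_vec q u) v = 0" using ip_spn v by blast
        then have "ip I u w = 0" unfolding ip_perm[OF q] w by simp
        moreover have "ip I u w = ip I u u + ip I u (Q w)"
        proof -
          have "w = (\<lambda>i. u i + Q w i)" unfolding u_def by simp
          then show ?thesis using ip_add_right by metis
        qed
        moreover have "ip I u (Q w) = 0" using uV Q_in by blast
        ultimately have uu: "ip I u u = 0" by simp
        have "Q w = w"
        proof
          fix i
          show "Q w i = w i"
          proof (cases "i \<in> I")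
            case True
            then show ?thesis using ip_self_zero[OF finI uu True] unfolding u_def by simp
          next
            case False
            then show ?thesis using u0 Q_van[OF False] unfolding u_def by simp
          qed
        qed
        then show "perm_vec (inv q) v \<in> V" unfolding w_def[symmetric] using Q_in by metis
      qed
      have "\<forall>v\<in>V. perm_vec (inv (inv q)) v \<in> V" using pres_inv[OF finI permutes_inv[OF q] B] .
      then have "\<forall>v\<in>V. perm_vec q v \<in> V" using permutes_inv_inv[OF q] by simp
      then show "q \<in> Gp" unfolding Gp_def using q by blast
    qed
  next
    show "Gp \<subseteq> G_LP k s t lam p"
    proof
      fix q assume qG: "q \<in> Gp"
      have q: "q permutes I" and H: "\<forall>v\<in>V. perm_vec q v \<in> V" using qG unfolding Gp_def by auto
      have H': "\<forall>v\<in>V. perm_vec (inv q) v \<in> V" using pres_inv[OF finI q H] .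
      have "perm_vec q x \<in> LP_feasible k s t lam p \<and> (\<Sum>i\<in>I. perm_vec q x i) = (\<Sum>i\<in>I. x i)"
        if xF: "x \<in> LP_feasible k s t lam p" for x
      proof
        have x0': "\<forall>i. i \<notin> I \<longrightarrow> x i = 0" and xb: "\<forall>i\<in>I. 0 \<le> x i \<and> x i \<le> p"
          and xo: "\<forall>r\<in>R. ip I (\<lambda>i. x i - x0 i) (f r) = 0" using xF unfolding Fchar by auto
        show "perm_vec q x \<in> LP_feasible k s t lam p"
          unfolding Fchar
        proof (intro conjI)
          show "\<forall>i. i \<notin> I \<longrightarrow> perm_vec q x i = 0"
            using x0' permutes_not_in[OF permutes_inv[OF q]] unfolding perm_vec_def by simp
          show "\<forall>i\<in>I. 0 \<le> perm_vec q x i \<and> perm_vec q x i \<le> p"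
          proof
            fix i assume "i \<in> I"
            then have "inv q i \<in> I" using permutes_in_image[OF permutes_inv[OF q]] by blast
            then show "0 \<le> perm_vec q x i \<and> perm_vec q x i \<le> p" using xb unfolding perm_vec_def by blast
          qed
          show "\<forall>r\<in>R. ip I (\<lambda>i. perm_vec q x i - x0 i) (f r) = 0"
          proof
            fix r assume r: "r \<in> R"
            have "(\<lambda>i. perm_vec q x i - x0 i) = perm_vec q (\<lambda>i. x i - x0 i)"
              using x0_inv[OF q] unfolding perm_vec_def by (metis)
            then have "ip I (\<lambda>i. perm_vec q x i - x0 i) (f r) = ip I (\<lambda>i. x i - x0 i) (\<lambda>i. f r (q i))"
              using ip_perm[OF q] by simp
            also have "\<dots> = 0"
            proof -
              have "perm_vec (inv q) (f r) \<in> V" using H' spn_gen[OF r finR] by blast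
              then have "(\<lambda>i. f r (q i)) \<in> V" unfolding perm_vec_inv[OF q] .
              then show ?thesis using ip_spn[OF xo] by blast
            qed
            finally show "ip I (\<lambda>i. perm_vec q x i - x0 i) (f r) = 0" .
          qed
        qed
        show "(\<Sum>i\<in>I. perm_vec q x i) = (\<Sum>i\<in>I. x i)"
          unfolding perm_vec_def using sum_perm_inv[OF q] .
      qed
      then show "q \<in> G_LP k s t lam p" unfolding G_LP_def I_def using q I_def by blast
    qed
  qed
  show ?thesis using GLP Gmat unfolding lam_def p_def by simp
qed

end
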